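(* Let $X\sim\mathrm{Gamma}(\alpha,\lambda)$ with $\alpha,\lambda>0$, and let $m\geqslant 2$ be an integer. Then the extended upper Gini index of $X$ is \[ IG_{m;\max}=\frac{1}{m}\left[\frac{1}{\alpha}\int_0^\infty\left\{1-\frac{\gamma^m(\alpha,t)}{\Gamma^m(\alpha)}\right\}{\rm d}t-1\right]. \]
   Context: $\mathrm{Gamma}(\alpha,\lambda)$ denotes the distribution with density $\lambda^\alpha x^{\alpha-1}e^{-\lambda x}/\Gamma(\alpha)$ for $x>0$ (shape $\alpha$, rate $\lambda$), with mean $\mu=\alpha/\lambda$. $\gamma(\alpha,t)=\int_0^t s^{\alpha-1}e^{-s}\,{\rm d}s$ is the lower incomplete gamma function. For i.i.d. copies $X_1,\ldots,X_m$ of $X$, $IG_{m;\max}=\dfrac{\mathbb{E}[\max\{X_1,\ldots,X_m\}-X_1]}{m\mu}$. *)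

theory Defs
  imports "HOL-Probability.Probability"
begin

definition gamma_density :: "real \<Rightarrow> real \<Rightarrow> real \<Rightarrow> real" where
  "gamma_density alpha lam x =
     (if x > 0 then lam powr alpha * x powr (alpha - 1) * exp (- lam * x) / Gamma alpha else 0)"

definition gamma_measure :: "real \<Rightarrow> real \<Rightarrow> real measure" where
  "gamma_measure alpha lam = density lborel (\<lambda>x. ennreal (gamma_density alpha lam x))"

definition lower_inc_gamma :: "real \<Rightarrow> real \<Rightarrow> real" where
  "lower_inc_gamma a t = (LBINT s=0..t. s powr (a - 1) * exp (- s))"

text \<open>Extended upper Gini index: X_1,...,X_m i.i.d. with law D (product measure,
  indices 0..m-1, X_1 is coordinate 0), mu the mean of D.\<close>
definition IG_max :: "nat \<Rightarrow> real measure \<Rightarrow> real" where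
  "IG_max m D =
     (\<integral>x. (Max (x ` {..<m}) - x 0) \<partial>(PiM {..<m} (\<lambda>_. D)))
       / (real m * (\<integral>x. x \<partial>D))"

end

theory Submission
  imports Defs
begin



lemma gamma_nn:
  fixes b l :: real assumes b: "b > 0" and l: "l > 0"
  shows "(\<integral>\<^sup>+x. ennreal (indicator {0<..} x * (x powr (b-1) * exp(-l*x))) \<partial>lborel) = ennreal (Gamma b / l powr b)"
proof -
  let ?g = "\<lambda>s::real. ennreal (indicator {0<..} s * (s powr (b-1) / exp s))"
  have I0: "(\<integral>\<^sup>+s. ennreal (indicator {0..} s * (s powr (b-1) / exp s)) \<partial>lborel) = ennreal (Gamma b)"
    using nn_integral_has_integral_lebesgue[of "{0..}" "\<lambda>t. t powr (b - 1) / exp t" "Gamma b"] Gamma_integral_real[OF b]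
    by simp
  have "(\<lambda>s. ennreal (indicator {0..} s * (s powr (b-1) / exp s))) = ?g"
    by (auto simp: fun_eq_iff indicator_def)
  with I0 have I: "(\<integral>\<^sup>+s. ?g s \<partial>lborel) = ennreal (Gamma b)" by simp
  have "(\<integral>\<^sup>+s. ?g s \<partial>lborel) = \<bar>l\<bar> * (\<integral>\<^sup>+x. ?g (0 + l * x) \<partial>lborel)"
    by (rule nn_integral_real_affine) (use l in auto)
  also have "(\<lambda>x. ?g (0 + l * x)) = (\<lambda>x. ennreal (l powr (b-1)) * ennreal (indicator {0<..} x * (x powr (b-1) * exp(-l*x))))"
    using l by (auto simp: fun_eq_iff indicator_def powr_mult exp_minus field_simps zero_less_mult_iff ennreal_mult'[symmetric])
  also have "(\<integral>\<^sup>+x. ennreal (l powr (b-1)) * ennreal (indicator {0<..} x * (x powr (b-1) * exp(-l*x))) \<partial>lborel)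
     = ennreal (l powr (b-1)) * (\<integral>\<^sup>+x. ennreal (indicator {0<..} x * (x powr (b-1) * exp(-l*x))) \<partial>lborel)"
    by (rule nn_integral_cmult) measurable
  finally have E: "ennreal (Gamma b) = ennreal (l powr b) * (\<integral>\<^sup>+x. ennreal (indicator {0<..} x * (x powr (b-1) * exp(-l*x))) \<partial>lborel)"
    using I l by (simp add: mult.assoc[symmetric] ennreal_mult'[symmetric] powr_add[symmetric] powr_mult_base)
  have "ennreal (1 / l powr b) * ennreal (l powr b) = 1"
    using l by (simp add: ennreal_mult'[symmetric])
  then have "(\<integral>\<^sup>+x. ennreal (indicator {0<..} x * (x powr (b-1) * exp(-l*x))) \<partial>lborel) = ennreal (1 / l powr b) * ennreal (Gamma b)"
    by (simp add: E mult.assoc[symmetric])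
  then show ?thesis using l by (simp add: ennreal_mult'[symmetric])
qed

lemma Gamma_ne0: "(a::real) > 0 \<Longrightarrow> Gamma a \<noteq> 0"
  using Gamma_real_pos[of a] by linarith

lemma gd_eq: assumes a: "a > 0"
  shows "gamma_density a l x = (l powr a / Gamma a) * (indicator {0<..} x * (x powr (a-1) * exp(-l*x)))"
  by (simp add: gamma_density_def indicator_def)

lemma gd_nonneg: assumes a: "a > 0" and l: "l > 0" shows "0 \<le> gamma_density a l x"
  using a Gamma_real_pos[OF a] Gamma_ne0[OF a] by (simp add: gamma_density_def)

lemma gd_meas[measurable]: "gamma_density a l \<in> borel_measurable borel"
  unfolding gamma_density_def by measurable

lemma gd_total: assumes a: "a > 0" and l: "l > 0"
  shows "(\<integral>\<^sup>+x. ennreal (gamma_density a l x) \<partial>lborel) = 1"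
proof -
  have "(\<integral>\<^sup>+x. ennreal (gamma_density a l x) \<partial>lborel) =
     (\<integral>\<^sup>+x. ennreal (l powr a / Gamma a) * ennreal (indicator {0<..} x * (x powr (a-1) * exp(-l*x))) \<partial>lborel)"
    using a l Gamma_real_pos[OF a] Gamma_ne0[OF a] by (intro nn_integral_cong) (subst ennreal_mult'[symmetric], simp, simp add: gd_eq)
  also have "\<dots> = ennreal (l powr a / Gamma a) * (\<integral>\<^sup>+x. ennreal (indicator {0<..} x * (x powr (a-1) * exp(-l*x))) \<partial>lborel)"
    by (rule nn_integral_cmult) measurable
  also have "\<dots> = ennreal (l powr a / Gamma a) * ennreal (Gamma a / l powr a)"
    using gamma_nn[OF a l] by simp
  also have "\<dots> = 1" using a l Gamma_real_pos[OF a] Gamma_ne0[OF a]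
    by (simp add: ennreal_mult'[symmetric])
  finally show ?thesis .
qed

lemma gd_mean: assumes a: "a > 0" and l: "l > 0"
  shows "(\<integral>\<^sup>+x. ennreal (gamma_density a l x * x) \<partial>lborel) = ennreal (a / l)"
proof -
  have "(\<integral>\<^sup>+x. ennreal (gamma_density a l x * x) \<partial>lborel) =
     (\<integral>\<^sup>+x. ennreal (l powr a / Gamma a) * ennreal (indicator {0<..} x * (x powr ((a+1)-1) * exp(-l*x))) \<partial>lborel)"
    using a l Gamma_real_pos[OF a] Gamma_ne0[OF a] 
    by (intro nn_integral_cong) (auto simp: gd_eq ennreal_mult'[symmetric] indicator_def powr_add powr_diff)
  also have "\<dots> = ennreal (l powr a / Gamma a) * (\<integral>\<^sup>+x. ennreal (indicator {0<..} x * (x powr ((a+1)-1) * exp(-l*x))) \<partial>lborel)"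
    by (rule nn_integral_cmult) measurable
  also have "\<dots> = ennreal (l powr a / Gamma a) * ennreal (Gamma (a+1) / l powr (a+1))"
    using gamma_nn[of "a+1" l] a l by simp
  also have "Gamma (a+1) = a * Gamma a"
    using a by (intro Gamma_plus1) (auto elim!: nonpos_Ints_cases)
  also have "ennreal (l powr a / Gamma a) * ennreal (a * Gamma a / l powr (a + 1)) = ennreal (a / l)"
    using a l Gamma_real_pos[OF a] Gamma_ne0[OF a] by (simp add: ennreal_mult'[symmetric] powr_add)

  finally show ?thesis .
qed

lemma gd_lig: assumes a: "a > 0" and l: "l > 0" and u: "u > 0"
  shows "lower_inc_gamma a (l * u) = Gamma a * (\<integral>x. indicator {..<u} x * gamma_density a l x \<partial>lborel)"
proof -
  have "lower_inc_gamma a (l * u) = (\<integral>s. indicator {0<..<l*u} s * (s powr (a - 1) * exp (- s)) \<partial>lborel)"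
    using l u by (simp add: lower_inc_gamma_def interval_lebesgue_integral_def set_lebesgue_integral_def einterval_def)
      (auto intro!: Bochner_Integration.integral_cong simp: indicator_def)
  also have "\<dots> = \<bar>l\<bar> *\<^sub>R (\<integral>x. indicator {0<..<l*u} (0 + l * x) * ((0 + l * x) powr (a - 1) * exp (- (0 + l * x))) \<partial>lborel)"
    by (rule lborel_integral_real_affine) (use l in auto)
  also have "(\<lambda>x. indicator {0<..<l*u} (0 + l * x) * ((0 + l * x) powr (a - 1) * exp (- (0 + l * x))))
     = (\<lambda>x. l powr (a - 1) * (indicator {0<..<u} x * (x powr (a - 1) * exp (- l * x))))"
    using l by (auto simp: fun_eq_iff indicator_def powr_mult zero_less_mult_iff)
  also have "(\<lambda>x. indicator {..<u} x * gamma_density a l x) = (\<lambda>x. (l powr a / Gamma a) * (indicator {0<..<u} x * (x powr (a - 1) * exp (- l * x))))"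
    using a by (auto simp: fun_eq_iff indicator_def gd_eq)
  ultimately have "lower_inc_gamma a (l * u) = l * (l powr (a - 1) * (\<integral>x. indicator {0<..<u} x * (x powr (a - 1) * exp (- l * x)) \<partial>lborel))"
    "Gamma a * (\<integral>x. indicator {..<u} x * gamma_density a l x \<partial>lborel) = Gamma a * ((l powr a / Gamma a) * (\<integral>x. indicator {0<..<u} x * (x powr (a - 1) * exp (- l * x)) \<partial>lborel))"
    using l by (simp_all only: integral_mult_right_zero) simp
  moreover have "l * l powr (a - 1) = l powr a" using l by (simp add: powr_diff)
  ultimately show ?thesis using l Gamma_real_pos[OF a] Gamma_ne0[OF a]
    by (simp add: mult.assoc[symmetric])
qed

lemma gd_G: assumes a: "a > 0" and l: "l > 0"
  shows "measure (gamma_measure a l) {..<u} = (\<integral>x. indicator {..<u} x * gamma_density a l x \<partial>lborel)"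
proof -
  have "emeasure (gamma_measure a l) {..<u} = (\<integral>\<^sup>+x. ennreal (indicator {..<u} x * gamma_density a l x) \<partial>lborel)"
    unfolding gamma_measure_def
    by (subst emeasure_density) (auto intro!: nn_integral_cong split: split_indicator)
  moreover have "(\<integral>x. indicator {..<u} x * gamma_density a l x \<partial>lborel) = enn2real (\<integral>\<^sup>+x. ennreal (indicator {..<u} x * gamma_density a l x) \<partial>lborel)"
    by (rule integral_eq_nn_integral) (auto simp: gd_nonneg a l)
  ultimately show ?thesis by (simp add: measure_def)
qed


theorem proposition2p13:
  fixes alpha lam :: real and m :: nat
  assumes "alpha > 0" and "lam > 0" and "m \<ge> 2"
  shows "IG_max m (gamma_measure alpha lam) =
    (1 / real m) * ((1 / alpha) *
       (\<integral>t\<in>{0<..}. (1 - (lower_inc_gamma alpha t) ^ m / (Gamma alpha) ^ m) \<partial>lborel) - 1)"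
proof -
  note a = \<open>alpha > 0\<close> and l = \<open>lam > 0\<close>
  define D where "D = gamma_measure alpha lam"
  define P where "P = PiM {..<m} (\<lambda>_. D)"
  define F where "F u = measure D {..<u}" for u
  define Mx where "Mx x = Max (x ` {..<m})" for x :: "nat \<Rightarrow> real"
  have m0: "m > 0" "{..<m} \<noteq> {}" "0 \<in> {..<m}" using assms(3) by (auto simp: lessThan_empty_iff)
  have spD: "space D = UNIV" and sD: "sets D = sets borel" by (simp_all add: D_def gamma_measure_def)
  have "prob_space D"
    by (rule prob_spaceI) (simp add: spD D_def gamma_measure_def emeasure_density gd_total a l)
  then interpret D: prob_space D .
  interpret PP: finite_product_prob_space "\<lambda>_. D" "{..<m}"
    by (simp add: finite_product_prob_space_def finite_product_sigma_finite_def product_prob_space_def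
      product_sigma_finite_def product_prob_space_axioms_def finite_product_sigma_finite_axioms_def
      D.prob_space_axioms D.sigma_finite_measure_axioms)
  have "prob_space P" unfolding P_def by (rule prob_space_PiM) (rule D.prob_space_axioms)
  then interpret Pp: prob_space P .
  have spP: "space P = PiE {..<m} (\<lambda>_. UNIV)" by (simp add: P_def space_PiM spD)
  have comp_meas: "(\<lambda>x. x i) \<in> borel_measurable P" if "i < m" for i
  proof -
    have "(\<lambda>x. x i) \<in> measurable P D" unfolding P_def using that by (intro measurable_component_singleton) auto
    then show ?thesis by (simp add: measurable_def sD)
  qed
  have Mx_meas[measurable]: "Mx \<in> borel_measurable P"
    unfolding Mx_def using borel_measurable_Max[of "{..<m}" "\<lambda>i x. x i" P] comp_meas by auto
  have nnD: "(\<integral>\<^sup>+x. ennreal (norm x) \<partial>D) = ennreal (alpha / lam)"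
  proof -
    have "(\<integral>\<^sup>+x. ennreal (norm x) \<partial>D) = (\<integral>\<^sup>+x. ennreal (gamma_density alpha lam x) * ennreal (norm x) \<partial>lborel)"
      unfolding D_def gamma_measure_def by (subst nn_integral_density) auto
    also have "\<dots> = (\<integral>\<^sup>+x. ennreal (gamma_density alpha lam x * x) \<partial>lborel)"
      by (intro nn_integral_cong) (auto simp: gamma_density_def ennreal_mult''[symmetric])
    finally show ?thesis by (simp add: gd_mean a l)
  qed
  have idD: "(\<lambda>x. x) \<in> borel_measurable D" by (simp add: measurable_cong_sets[OF sD refl])
  have intD: "integrable D (\<lambda>x. x)"
    by (rule integrableI_bounded) (use nnD in \<open>auto simp: measurable_cong_sets[OF sD refl]\<close>)
  have meanD: "(\<integral>x. x \<partial>D) = alpha / lam"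
  proof -
    have "(\<integral>x. x \<partial>D) = (\<integral>x. gamma_density alpha lam x * x \<partial>lborel)"
      unfolding D_def gamma_measure_def by (subst integral_density) (auto simp: gd_nonneg a l)
    also have "\<dots> = enn2real (\<integral>\<^sup>+x. ennreal (gamma_density alpha lam x * x) \<partial>lborel)"
      by (rule integral_eq_nn_integral) (use Gamma_real_pos[OF a] in \<open>auto simp: gamma_density_def\<close>)
    finally show ?thesis using a l by (simp add: gd_mean)
  qed
  have distr_i: "distr P D (\<lambda>x. x i) = D" if "i < m" for i
    unfolding P_def using that by (intro distr_PiM_component D.prob_space_axioms) auto
  have int_i: "integrable P (\<lambda>x. x i)" if "i < m" for i
  proof -
    have "integrable (distr P D (\<lambda>x. x i)) (\<lambda>x. x)" using distr_i[OF that] intD by simp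
    then show ?thesis using that idD by (subst (asm) integrable_distr_eq) (auto simp: P_def)
  qed
  have mean0: "(\<integral>x. x 0 \<partial>P) = alpha / lam"
  proof -
    have "(\<integral>x. x 0 \<partial>P) = (\<integral>x. x \<partial>distr P D (\<lambda>x. x 0))"
      using m0 idD by (subst integral_distr) (auto simp: P_def)
    then show ?thesis using distr_i[OF m0(1)] meanD by simp
  qed
  have intMx: "integrable P Mx"
  proof (rule Bochner_Integration.integrable_bound)
    show "integrable P (\<lambda>x. \<Sum>i<m. \<bar>x i\<bar>)" using int_i by auto
    show "AE x in P. norm (Mx x) \<le> norm (\<Sum>i<m. \<bar>x i\<bar>)"
    proof (intro AE_I2)
      fix x :: "nat \<Rightarrow> real"
      have "Mx x \<in> x ` {..<m}" unfolding Mx_def using m0 by (intro Max_in) auto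
      then obtain j where j: "j < m" "Mx x = x j" by auto
      have "\<bar>x j\<bar> \<le> (\<Sum>i<m. \<bar>x i\<bar>)" using j by (intro member_le_sum) auto
      then show "norm (Mx x) \<le> norm (\<Sum>i<m. \<bar>x i\<bar>)" using j by simp
    qed
  qed simp
  have Fb: "0 \<le> F t" "F t \<le> 1" for t unfolding F_def by auto
  have Fmono: "mono F" unfolding F_def mono_def
    by (auto intro!: D.finite_measure_mono simp: sD)
  have F_meas[measurable]: "F \<in> borel_measurable borel" by (rule borel_measurable_mono[OF Fmono])
  have F0: "F 0 = 0"
  proof -
    have "(\<lambda>x. indicator {..<0} x * gamma_density alpha lam x) = (\<lambda>x. 0::real)"
      by (auto simp: fun_eq_iff indicator_def gamma_density_def)
    then show ?thesis unfolding F_def D_def by (simp add: gd_G a l)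
  qed
  have setlt: "{x \<in> space P. Mx x < t} = PiE {..<m} (\<lambda>_. {..<t})" for t
  proof (intro set_eqI iffI)
    fix x assume "x \<in> {x \<in> space P. Mx x < t}"
    then have x: "x \<in> extensional {..<m}" "Max (x`{..<m}) < t" by (auto simp: spP Mx_def PiE_iff)
    then have "\<forall>i<m. x i < t" using m0 by (simp add: Max_less_iff)
    with x show "x \<in> PiE {..<m} (\<lambda>_. {..<t})" by (simp add: PiE_iff)
  next
    fix x assume "x \<in> PiE {..<m} (\<lambda>_. {..<t})"
    then have x: "x \<in> extensional {..<m}" "\<forall>i<m. x i < t" by (auto simp: PiE_iff)
    then have "Max (x`{..<m}) < t" using m0 by (simp add: Max_less_iff)
    with x show "x \<in> {x \<in> space P. Mx x < t}" by (simp add: spP Mx_def PiE_iff)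
  qed
  have prodf: "measure P {x \<in> space P. Mx x < t} = F t ^ m" for t
  proof -
    have "measure P {x \<in> space P. Mx x < t} = measure P (PiE {..<m} (\<lambda>_. {..<t}))"
      by (simp only: setlt)
    also have "\<dots> = (\<Prod>i<m. measure D {..<t})"
      unfolding P_def by (rule PP.finite_measure_PiM_emb) (simp add: sD)
    finally have "measure P {x \<in> space P. Mx x < t} = (\<Prod>i<m. measure D {..<t})" .
    then show ?thesis by (simp add: F_def)
  qed
  have setlt_sets: "{x \<in> space P. Mx x < t} \<in> sets P" for t
  proof -
    have "{x \<in> space P. Mx x < t} = Mx -` {..<t} \<inter> space P" by auto
    then show ?thesis using measurable_sets[OF Mx_meas, of "{..<t}"] by simp
  qed
  have compl: "measure P {x \<in> space P. t \<le> Mx x} = 1 - F t ^ m" for t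
  proof -
    have "{x \<in> space P. t \<le> Mx x} = space P - {x \<in> space P. Mx x < t}" by auto
    then show ?thesis using Pp.prob_compl[OF setlt_sets[of t]] prodf by simp
  qed
  have AEpos: "AE x in P. 0 \<le> Mx x"
  proof -
    have "emeasure P {x \<in> space P. Mx x < 0} = 0"
      using prodf[of 0] m0 by (simp add: Pp.emeasure_eq_measure F0)
    then show ?thesis
      by (subst AE_iff_measurable[OF setlt_sets[of 0]]) auto
  qed
  have setge_sets: "{x \<in> space P. t \<le> Mx x} \<in> sets P" for t
  proof -
    have "{x \<in> space P. t \<le> Mx x} = Mx -` {t..} \<inter> space P" by auto
    then show ?thesis using measurable_sets[OF Mx_meas, of "{t..}"] by simp
  qed
  interpret PS: pair_sigma_finite P lborel
    by (intro pair_sigma_finite.intro Pp.sigma_finite_measure_axioms lborel.sigma_finite_measure_axioms)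
  have g_meas: "(\<lambda>(x, t). indicator {0<..Mx x} t :: ennreal) \<in> borel_measurable (P \<Otimes>\<^sub>M lborel)"
  proof -
    have 1: "(\<lambda>p. Mx (fst p)) \<in> borel_measurable (P \<Otimes>\<^sub>M lborel)"
      by (rule measurable_compose[OF measurable_fst Mx_meas])
    have 2: "(\<lambda>p. snd p) \<in> borel_measurable (P \<Otimes>\<^sub>M lborel)"
      using measurable_snd[of P lborel] by (simp add: measurable_cong_sets[OF refl sets_lborel])
    have "(\<lambda>(x, t). indicator {0<..Mx x} t :: ennreal) = (\<lambda>p. if 0 < snd p \<and> snd p \<le> Mx (fst p) then 1 else 0)"
      by (auto simp: fun_eq_iff indicator_def)
    moreover have "(\<lambda>p. if 0 < snd p \<and> snd p \<le> Mx (fst p) then 1 else 0 :: ennreal) \<in> borel_measurable (P \<Otimes>\<^sub>M lborel)"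
      using 1 2 by measurable
    ultimately show ?thesis by simp
  qed
  have nnMx: "(\<integral>\<^sup>+x. ennreal (Mx x) \<partial>P) = (\<integral>\<^sup>+t. ennreal (indicator {0<..} t * (1 - F t ^ m)) \<partial>lborel)"
  proof -
    have "(\<integral>\<^sup>+x. ennreal (Mx x) \<partial>P) = (\<integral>\<^sup>+x. (\<integral>\<^sup>+t. indicator {0<..Mx x} t \<partial>lborel) \<partial>P)"
    proof (intro nn_integral_cong)
      fix x
      show "ennreal (Mx x) = (\<integral>\<^sup>+t. indicator {0<..Mx x} t \<partial>lborel)"
        by (cases "0 \<le> Mx x") (auto simp: ennreal_neg)
    qed
    also have "\<dots> = (\<integral>\<^sup>+t. (\<integral>\<^sup>+x. indicator {0<..Mx x} t \<partial>P) \<partial>lborel)"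
      using PS.Fubini'[OF g_meas] by simp
    also have "\<dots> = (\<integral>\<^sup>+t. ennreal (indicator {0<..} t * (1 - F t ^ m)) \<partial>lborel)"
    proof (intro nn_integral_cong)
      fix t :: real
      show "(\<integral>\<^sup>+x. indicator {0<..Mx x} t \<partial>P) = ennreal (indicator {0<..} t * (1 - F t ^ m))"
      proof (cases "0 < t")
        case True
        have "(\<integral>\<^sup>+x. indicator {0<..Mx x} t \<partial>P) = (\<integral>\<^sup>+x. indicator {x \<in> space P. t \<le> Mx x} x \<partial>P)"
          using True by (intro nn_integral_cong) (auto simp: indicator_def)
        also have "\<dots> = emeasure P {x \<in> space P. t \<le> Mx x}" using setge_sets by simp
        also have "\<dots> = ennreal (1 - F t ^ m)" by (simp add: Pp.emeasure_eq_measure compl)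
        finally show ?thesis using True by simp
      qed simp
    qed
    finally show ?thesis .
  qed
  define h where "h t = indicator {0<..} t * (1 - F (t / lam) ^ m)" for t
  have h_meas[measurable]: "h \<in> borel_measurable borel"
    unfolding h_def by measurable
  have h_nonneg: "0 \<le> h t" for t
    using Fb[of "t/lam"] by (auto simp: h_def indicator_def intro!: power_le_one)
  have sub: "(\<integral>\<^sup>+t. ennreal (indicator {0<..} t * (1 - F t ^ m)) \<partial>lborel) = ennreal (1 / lam) * (\<integral>\<^sup>+t. ennreal (h t) \<partial>lborel)"
  proof -
    have "(\<integral>\<^sup>+t. ennreal (indicator {0<..} t * (1 - F t ^ m)) \<partial>lborel) =
       \<bar>1/lam\<bar> * (\<integral>\<^sup>+x. ennreal (indicator {0<..} (0 + (1/lam) * x) * (1 - F (0 + (1/lam) * x) ^ m)) \<partial>lborel)"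
      by (rule nn_integral_real_affine) (use l in auto)
    also have "(\<lambda>x. ennreal (indicator {0<..} (0 + (1/lam) * x) * (1 - F (0 + (1/lam) * x) ^ m))) = (\<lambda>x. ennreal (h x))"
      using l by (auto simp: fun_eq_iff h_def indicator_def zero_less_mult_iff zero_less_divide_iff)
    finally show ?thesis using l by simp
  qed
  have pw: "indicator {0<..} t * (1 - (lower_inc_gamma alpha t) ^ m / (Gamma alpha) ^ m) = h t" for t
  proof (cases "t > 0")
    case True
    have "lower_inc_gamma alpha t = lower_inc_gamma alpha (lam * (t / lam))" using l by simp
    also have "\<dots> = Gamma alpha * F (t / lam)"
      using gd_lig[OF a l, of "t/lam"] gd_G[OF a l, of "t/lam"] True l by (simp add: F_def D_def)
    finally show ?thesis using True Gamma_ne0[OF a] by (simp add: h_def power_divide power_mult_distrib)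
  qed (simp add: h_def)
  have RHS: "(\<integral>t\<in>{0<..}. (1 - (lower_inc_gamma alpha t) ^ m / (Gamma alpha) ^ m) \<partial>lborel) = enn2real (\<integral>\<^sup>+t. ennreal (h t) \<partial>lborel)"
    unfolding set_lebesgue_integral_def by (simp add: pw h_nonneg integral_eq_nn_integral)
  have EMx: "(\<integral>x. Mx x \<partial>P) = (1 / lam) * enn2real (\<integral>\<^sup>+t. ennreal (h t) \<partial>lborel)"
    using l by (simp add: integral_eq_nn_integral[OF Mx_meas AEpos] nnMx sub enn2real_mult)
  have "IG_max m (gamma_measure alpha lam) = ((\<integral>x. Mx x \<partial>P) - alpha / lam) / (real m * (alpha / lam))"
    unfolding IG_max_def D_def[symmetric] P_def[symmetric] meanD Mx_def[symmetric]
    using intMx int_i[OF m0(1)] mean0 by (subst Bochner_Integration.integral_diff) auto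
  also have "\<dots> = (enn2real (\<integral>\<^sup>+t. ennreal (h t) \<partial>lborel) - alpha) / (real m * alpha)"
    unfolding EMx using l a m0 by (simp add: divide_simps)
  finally show ?thesis unfolding RHS using a l m0 by (simp add: field_simps)
qed

end
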